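(* Let $n\ge2$ and let $U$ be a domain of $\mathbb{R}^n$. For every $v\in C^\infty(U)$, in $U$ we have $$\Big|\,|D^2vDv|^2-\Delta v\,\Delta_\infty v-\tfrac12\big[|D^2v|^2-(\Delta v)^2\big]|Dv|^2\Big|\le\frac{n-2}{2}\Big[|D^2v|^2|Dv|^2-|D^2vDv|^2\Big].$$
   Context: $\Delta v=\operatorname{div}(Dv)$, $\Delta_\infty v=\langle D^2v\,Dv,Dv\rangle$, and $|D^2v|$ is the Frobenius (Hilbert–Schmidt) norm of the Hessian. *)

theory Defs
  imports "HOL-Analysis.Analysis"
begin

definition partial :: "'n::finite \<Rightarrow> (real^'n \<Rightarrow> real) \<Rightarrow> real^'n \<Rightarrow> real" where
  "partial i f x = frechet_derivative f (at x) (axis i 1)"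

fun iter_partial :: "'n::finite list \<Rightarrow> (real^'n \<Rightarrow> real) \<Rightarrow> real^'n \<Rightarrow> real" where
  "iter_partial [] f = f"
| "iter_partial (i # is) f = partial i (iter_partial is f)"

definition smooth_on :: "(real^'n::finite) set \<Rightarrow> (real^'n \<Rightarrow> real) \<Rightarrow> bool" where
  "smooth_on U f \<longleftrightarrow> (\<forall>is. iter_partial is f differentiable_on U)"

definition grad :: "(real^'n::finite \<Rightarrow> real) \<Rightarrow> real^'n \<Rightarrow> real^'n" where
  "grad f x = (\<chi> i. partial i f x)"

definition hessian :: "(real^'n::finite \<Rightarrow> real) \<Rightarrow> real^'n \<Rightarrow> real^'n^'n" where
  "hessian f x = (\<chi> i j. partial i (partial j f) x)"

definition laplacian :: "(real^'n::finite \<Rightarrow> real) \<Rightarrow> real^'n \<Rightarrow> real" where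
  "laplacian f x = (\<Sum>i\<in>UNIV. partial i (\<lambda>y. grad f y $ i) x)"

definition inf_laplacian :: "(real^'n::finite \<Rightarrow> real) \<Rightarrow> real^'n \<Rightarrow> real" where
  "inf_laplacian f x = ((hessian f x *v grad f x) \<bullet> grad f x)"

definition frob_norm_sq :: "real^'n::finite^'n \<Rightarrow> real" where
  "frob_norm_sq A = (\<Sum>i\<in>UNIV. \<Sum>j\<in>UNIV. (A $ i $ j)^2)"

end

theory Submission
  imports Defs
begin


lemma line_deriv:
  fixes f :: "'a::real_normed_vector \<Rightarrow> real"
  assumes "f differentiable (at (y + t *\<^sub>R e))"
  shows "((\<lambda>s. f (y + s *\<^sub>R e)) has_real_derivative frechet_derivative f (at (y + t *\<^sub>R e)) e) (at t)"
proof -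
  have f: "(f has_derivative frechet_derivative f (at (y + t *\<^sub>R e))) (at (y + t *\<^sub>R e))"
    using assms frechet_derivative_works by blast
  have l: "((\<lambda>s. y + s *\<^sub>R e) has_derivative (\<lambda>s. s *\<^sub>R e)) (at t)"
    by (auto intro!: derivative_eq_intros)
  have c: "((\<lambda>s. f (y + s *\<^sub>R e)) has_derivative (\<lambda>s. frechet_derivative f (at (y + t *\<^sub>R e)) (s *\<^sub>R e))) (at t)"
    using has_derivative_compose[OF l f] by simp
  have lin: "linear (frechet_derivative f (at (y + t *\<^sub>R e)))"
    using assms linear_frechet_derivative by blast
  have "(\<lambda>s. frechet_derivative f (at (y + t *\<^sub>R e)) (s *\<^sub>R e)) = (*) (frechet_derivative f (at (y + t *\<^sub>R e)) e)"
    using linear_scale[OF lin] by (auto simp: fun_eq_iff)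
  then show ?thesis using c by (simp add: has_field_derivative_def)
qed

lemma mixed_step:
  fixes v :: "real^'n \<Rightarrow> real"
  assumes Dv: "\<forall>y\<in>B. v differentiable (at y)" and Dp: "\<forall>y\<in>B. partial i v differentiable (at y)"
    and h: "h > 0"
    and sub: "\<And>a b. 0 \<le> a \<Longrightarrow> a \<le> h \<Longrightarrow> 0 \<le> b \<Longrightarrow> b \<le> h \<Longrightarrow> x + a *\<^sub>R axis i 1 + b *\<^sub>R axis j 1 \<in> B"
  shows "\<exists>a b. 0 < a \<and> a < h \<and> 0 < b \<and> b < h \<and>
     v (x + h *\<^sub>R axis i 1 + h *\<^sub>R axis j 1) - v (x + h *\<^sub>R axis j 1) - v (x + h *\<^sub>R axis i 1) + v x
      = h * h * partial j (partial i v) (x + a *\<^sub>R axis i 1 + b *\<^sub>R axis j 1)"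
proof -
  define ei :: "real^'n" where "ei = axis i 1"
  define ej :: "real^'n" where "ej = axis j 1"
  have d1: "((\<lambda>s. v ((x + h *\<^sub>R ej) + s *\<^sub>R ei)) has_real_derivative partial i v (x + s *\<^sub>R ei + h *\<^sub>R ej)) (at s)"
    if "0 \<le> s" "s \<le> h" for s
  proof -
    have m: "x + h *\<^sub>R ej + s *\<^sub>R ei = x + s *\<^sub>R ei + h *\<^sub>R ej" by (simp add: algebra_simps)
    have "x + s *\<^sub>R ei + h *\<^sub>R ej \<in> B" using sub[of s h] that h by (simp add: ei_def ej_def)
    then have "v differentiable (at (x + h *\<^sub>R ej + s *\<^sub>R ei))" unfolding m using Dv by blast
    then have "((\<lambda>s. v (x + h *\<^sub>R ej + s *\<^sub>R ei)) has_real_derivative frechet_derivative v (at (x + h *\<^sub>R ej + s *\<^sub>R ei)) ei) (at s)"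
      by (rule line_deriv)
    then have "((\<lambda>s. v (x + h *\<^sub>R ej + s *\<^sub>R ei)) has_real_derivative frechet_derivative v (at (x + s *\<^sub>R ei + h *\<^sub>R ej)) ei) (at s)"
      by (simp only: m)
    then show ?thesis by (simp add: partial_def ei_def)
  qed
  have d2: "((\<lambda>s. v (x + s *\<^sub>R ei)) has_real_derivative partial i v (x + s *\<^sub>R ei)) (at s)"
    if "0 \<le> s" "s \<le> h" for s
  proof -
    have "x + s *\<^sub>R ei + 0 *\<^sub>R ej \<in> B" using sub[of s 0] that h by (simp add: ei_def ej_def)
    then show ?thesis using line_deriv[of v "x" s ei] Dv
      by (simp add: partial_def ei_def)
  qed
  have der: "((\<lambda>s. v ((x + h *\<^sub>R ej) + s *\<^sub>R ei) - v (x + s *\<^sub>R ei)) has_real_derivative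
      (partial i v (x + s *\<^sub>R ei + h *\<^sub>R ej) - partial i v (x + s *\<^sub>R ei))) (at s)"
    if "0 \<le> s" "s \<le> h" for s
    using d1[OF that] d2[OF that] by (rule DERIV_diff)
  obtain a where a: "0 < a" "a < h" and eqa:
     "(v ((x + h *\<^sub>R ej) + h *\<^sub>R ei) - v (x + h *\<^sub>R ei)) - (v ((x + h *\<^sub>R ej) + 0 *\<^sub>R ei) - v (x + 0 *\<^sub>R ei))
      = (h - 0) * (partial i v (x + a *\<^sub>R ei + h *\<^sub>R ej) - partial i v (x + a *\<^sub>R ei))"
    using MVT2[of 0 h "\<lambda>s. v ((x + h *\<^sub>R ej) + s *\<^sub>R ei) - v (x + s *\<^sub>R ei)"
        "\<lambda>s. partial i v (x + s *\<^sub>R ei + h *\<^sub>R ej) - partial i v (x + s *\<^sub>R ei)", OF h der]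
    by blast
  have d3: "((\<lambda>t. partial i v ((x + a *\<^sub>R ei) + t *\<^sub>R ej)) has_real_derivative partial j (partial i v) (x + a *\<^sub>R ei + t *\<^sub>R ej)) (at t)"
    if "0 \<le> t" "t \<le> h" for t
  proof -
    have "x + a *\<^sub>R ei + t *\<^sub>R ej \<in> B" using sub[of a t] that a by (simp add: ei_def ej_def)
    then show ?thesis using line_deriv[of "partial i v" "x + a *\<^sub>R ei" t ej] Dp
      by (simp add: partial_def[of j] ej_def)
  qed
  obtain b where b: "0 < b" "b < h" and eqb:
     "partial i v ((x + a *\<^sub>R ei) + h *\<^sub>R ej) - partial i v ((x + a *\<^sub>R ei) + 0 *\<^sub>R ej)
      = (h - 0) * partial j (partial i v) (x + a *\<^sub>R ei + b *\<^sub>R ej)"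
    using MVT2[of 0 h "\<lambda>t. partial i v ((x + a *\<^sub>R ei) + t *\<^sub>R ej)"
        "\<lambda>t. partial j (partial i v) (x + a *\<^sub>R ei + t *\<^sub>R ej)"] h d3 by auto
  have "v (x + h *\<^sub>R ei + h *\<^sub>R ej) - v (x + h *\<^sub>R ej) - v (x + h *\<^sub>R ei) + v x
      = h * h * partial j (partial i v) (x + a *\<^sub>R ei + b *\<^sub>R ej)"
    using eqa eqb by (simp add: algebra_simps)
  then show ?thesis using a b by (auto simp: ei_def ej_def)
qed

lemma norm_two_axes:
  fixes x :: "real^'n"
  assumes "0 \<le> a" "0 \<le> b"
  shows "dist (x + a *\<^sub>R axis i 1 + b *\<^sub>R axis j 1) x \<le> a + b"
proof -
  have "dist (x + a *\<^sub>R axis i 1 + b *\<^sub>R axis j 1) x = norm (a *\<^sub>R axis i (1::real) + b *\<^sub>R axis j 1)"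
    by (simp add: dist_norm)
  also have "\<dots> \<le> norm (a *\<^sub>R axis i (1::real)) + norm (b *\<^sub>R axis j (1::real))"
    by (rule norm_triangle_ineq)
  also have "\<dots> = a + b" using assms by simp
  finally show ?thesis .
qed

lemma smooth_diff_at:
  assumes "open U" "smooth_on U v" "y \<in> U"
  shows "iter_partial is v differentiable (at y)"
  using assms unfolding smooth_on_def differentiable_on_def
  by (metis at_within_open)

lemma abs_contra:
  fixes P Q y z :: real
  assumes "\<bar>y - P\<bar> < \<bar>Q - P\<bar> / 4" "\<bar>z - Q\<bar> < \<bar>Q - P\<bar> / 4" "y = z"
  shows False
  using assms by (cases "Q \<ge> P") (auto simp: abs_if split: if_splits)

lemma mixed_sym:
  fixes v :: "real^'n \<Rightarrow> real"
  assumes U: "open U" "smooth_on U v" "x \<in> U"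
  shows "partial i (partial j v) x = partial j (partial i v) x"
proof (rule ccontr)
  assume ne: "partial i (partial j v) x \<noteq> partial j (partial i v) x"
  define d where "d = \<bar>partial i (partial j v) x - partial j (partial i v) x\<bar>"
  have d: "d > 0" using ne by (simp add: d_def)
  have c1: "continuous (at x) (partial i (partial j v))"
    using smooth_diff_at[OF U, of "[i,j]"] differentiable_imp_continuous_within by force
  have c2: "continuous (at x) (partial j (partial i v))"
    using smooth_diff_at[OF U, of "[j,i]"] differentiable_imp_continuous_within by force
  obtain r where r: "r > 0" "ball x r \<subseteq> U" using U openE by blast
  obtain d1 where d1: "d1 > 0" "\<And>y. dist y x < d1 \<Longrightarrow> dist (partial i (partial j v) y) (partial i (partial j v) x) < d/4"
    using c1 d unfolding continuous_at_eps_delta by (meson zero_less_divide_iff zero_less_numeral)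
  obtain d2 where d2: "d2 > 0" "\<And>y. dist y x < d2 \<Longrightarrow> dist (partial j (partial i v) y) (partial j (partial i v) x) < d/4"
    using c2 d unfolding continuous_at_eps_delta by (meson zero_less_divide_iff zero_less_numeral)
  define \<delta> where "\<delta> = min r (min d1 d2)"
  have \<delta>: "\<delta> > 0" "\<delta> \<le> r" "\<delta> \<le> d1" "\<delta> \<le> d2" using r d1 d2 by (auto simp: \<delta>_def)
  define h where "h = \<delta> / 3"
  have h: "h > 0" using \<delta> by (simp add: h_def)
  define B where "B = ball x \<delta>"
  have BU: "B \<subseteq> U" using r \<delta> by (auto simp: B_def)
  have sub: "x + a *\<^sub>R axis k 1 + b *\<^sub>R axis l 1 \<in> B"
    if "0 \<le> a" "a \<le> h" "0 \<le> b" "b \<le> h" for a b k l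
  proof -
    have "dist (x + a *\<^sub>R axis k 1 + b *\<^sub>R axis l 1) x \<le> a + b" using norm_two_axes that by blast
    also have "\<dots> < \<delta>" using that h by (simp add: h_def)
    finally show ?thesis by (simp add: B_def dist_commute)
  qed
  have Dv: "\<forall>y\<in>B. v differentiable (at y)" using smooth_diff_at[OF U(1,2), of _ "[]"] BU by auto
  have Dpi: "\<forall>y\<in>B. partial i v differentiable (at y)" using smooth_diff_at[OF U(1,2), of _ "[i]"] BU by auto
  have Dpj: "\<forall>y\<in>B. partial j v differentiable (at y)" using smooth_diff_at[OF U(1,2), of _ "[j]"] BU by auto
  obtain a b where ab: "0 < a" "a < h" "0 < b" "b < h" and e1:
     "v (x + h *\<^sub>R axis i 1 + h *\<^sub>R axis j 1) - v (x + h *\<^sub>R axis j 1) - v (x + h *\<^sub>R axis i 1) + v x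
      = h * h * partial j (partial i v) (x + a *\<^sub>R axis i 1 + b *\<^sub>R axis j 1)"
    using mixed_step[OF Dv Dpi h sub] by blast
  obtain a' b' where ab': "0 < a'" "a' < h" "0 < b'" "b' < h" and e2:
     "v (x + h *\<^sub>R axis j 1 + h *\<^sub>R axis i 1) - v (x + h *\<^sub>R axis i 1) - v (x + h *\<^sub>R axis j 1) + v x
      = h * h * partial i (partial j v) (x + a' *\<^sub>R axis j 1 + b' *\<^sub>R axis i 1)"
    using mixed_step[OF Dv Dpj h sub] by blast
  have perm: "x + h *\<^sub>R axis j 1 + h *\<^sub>R axis i 1 = x + h *\<^sub>R axis i (1::real) + h *\<^sub>R axis j 1"
    by (simp add: algebra_simps)
  have "h * h * partial j (partial i v) (x + a *\<^sub>R axis i 1 + b *\<^sub>R axis j 1)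
     = h * h * partial i (partial j v) (x + a' *\<^sub>R axis j 1 + b' *\<^sub>R axis i 1)"
    using e1 e2[unfolded perm] by linarith
  then have eq: "partial j (partial i v) (x + a *\<^sub>R axis i 1 + b *\<^sub>R axis j 1)
     = partial i (partial j v) (x + a' *\<^sub>R axis j 1 + b' *\<^sub>R axis i 1)" using h by simp
  have "x + a *\<^sub>R axis i 1 + b *\<^sub>R axis j 1 \<in> B" using sub ab by simp
  then have "dist (x + a *\<^sub>R axis i 1 + b *\<^sub>R axis j 1) x < d2"
    using \<delta> by (metis B_def mem_ball dist_commute order_less_le_trans)
  then have q1: "dist (partial j (partial i v) (x + a *\<^sub>R axis i 1 + b *\<^sub>R axis j 1)) (partial j (partial i v) x) < d/4"
    by (rule d2(2))
  have "x + a' *\<^sub>R axis j 1 + b' *\<^sub>R axis i 1 \<in> B" using sub ab' by simp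
  then have "dist (x + a' *\<^sub>R axis j 1 + b' *\<^sub>R axis i 1) x < d1"
    using \<delta> by (metis B_def mem_ball dist_commute order_less_le_trans)
  then have q2: "dist (partial i (partial j v) (x + a' *\<^sub>R axis j 1 + b' *\<^sub>R axis i 1)) (partial i (partial j v) x) < d/4"
    by (rule d1(2))
  show False using abs_contra[of _ "partial j (partial i v) x" "partial i (partial j v) x"] q1 q2 eq unfolding d_def dist_real_def by blast
qed




definition outer :: "real^'n \<Rightarrow> real^'n \<Rightarrow> real^'n^'n" where
  "outer a b = (\<chi> i j. a$i * b$j)"

lemma inner_outer_outer: "inner (outer a b) (outer c d) = (a \<bullet> c) * (b \<bullet> d)"
  by (simp add: outer_def inner_vec_def sum_product inner_real_def mult_ac)

lemma delta_sum: "(\<Sum>j\<in>UNIV. (if i = j then (1::real) else 0) * f j) = f (i::'n::finite)"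
proof -
  have "(\<Sum>j\<in>UNIV. (if i = j then (1::real) else 0) * f j) = (\<Sum>j\<in>UNIV. if i = j then f j else 0)"
    by (rule sum.cong) auto
  then show ?thesis by simp
qed

lemma inner_mat1_outer: "inner (mat 1 :: real^'n^'n) (outer a b) = a \<bullet> b"
proof -
  have "inner (mat 1 :: real^'n^'n) (outer a b) = (\<Sum>i\<in>UNIV. \<Sum>j\<in>UNIV. (if i = j then (1::real) else 0) * (a$i * b$j))"
    unfolding inner_vec_def mat_def outer_def by simp
  also have "\<dots> = a \<bullet> b" by (simp only: delta_sum) (simp add: inner_vec_def)
  finally show ?thesis .
qed

lemma inner_outer_mat1: "inner (outer a b) (mat 1 :: real^'n^'n) = a \<bullet> b"
  using inner_mat1_outer by (metis inner_commute)

lemma inner_H_outer: "inner (H::real^'n^'n) (outer a b) = a \<bullet> (H *v b)"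
  unfolding inner_vec_def outer_def matrix_vector_mult_def
  by (simp add: sum_distrib_left mult_ac)

lemma inner_outer_H: "inner (outer a b) (H::real^'n^'n) = a \<bullet> (H *v b)"
  using inner_H_outer by (metis inner_commute)

lemma inner_H_mat1: "inner (H::real^'n^'n) (mat 1) = (\<Sum>i\<in>UNIV. H$i$i)"
proof -
  have "inner (H::real^'n^'n) (mat 1) = (\<Sum>i\<in>UNIV. \<Sum>j\<in>UNIV. (if i = j then (1::real) else 0) * H$i$j)"
    unfolding inner_vec_def mat_def by (simp add: mult.commute)
  also have "\<dots> = (\<Sum>i\<in>UNIV. H$i$i)" by (simp only: delta_sum)
  finally show ?thesis .
qed

lemma inner_mat1_H: "inner (mat 1) (H::real^'n^'n) = (\<Sum>i\<in>UNIV. H$i$i)"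
  using inner_H_mat1 by (metis inner_commute)

lemma inner_mat1_mat1: "inner (mat 1 :: real^'n^'n) (mat 1) = real CARD('n)"
  using inner_H_mat1[of "mat 1"] by (simp add: mat_def)

lemma sym_swap:
  fixes H :: "real^'n^'n"
  assumes sym: "\<And>i j. H$i$j = H$j$i"
  shows "a \<bullet> (H *v b) = b \<bullet> (H *v a)"
proof -
  have "a \<bullet> (H *v b) = (\<Sum>i\<in>UNIV. \<Sum>j\<in>UNIV. a$i * H$i$j * b$j)"
    by (simp add: inner_vec_def matrix_vector_mult_def inner_real_def sum_distrib_left mult.assoc)
  also have "\<dots> = (\<Sum>j\<in>UNIV. \<Sum>i\<in>UNIV. a$i * H$i$j * b$j)"
    by (rule sum.swap)
  also have "\<dots> = b \<bullet> (H *v a)"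
    by (simp add: inner_vec_def matrix_vector_mult_def inner_real_def sum_distrib_left sym mult_ac)
  finally show ?thesis .
qed

lemma frob_inner: "frob_norm_sq H = inner H H"
  unfolding frob_norm_sq_def inner_vec_def by (simp add: power2_eq_square)

lemma key_cs:
  fixes H :: "real^'n^'n" and g :: "real^'n"
  assumes sym: "\<And>i j. H$i$j = H$j$i"
  defines "G \<equiv> g \<bullet> g" and "w \<equiv> H *v g"
  defines "c \<equiv> g \<bullet> w" and "A \<equiv> w \<bullet> w" and "S \<equiv> (\<Sum>i\<in>UNIV. H$i$i)" and "Q \<equiv> inner H H"
  defines "P \<equiv> outer g w + outer w g" and "R \<equiv> outer g g"
  defines "X \<equiv> G^2 *\<^sub>R H - G *\<^sub>R P + c *\<^sub>R R" and "K \<equiv> G *\<^sub>R mat 1 - R"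
  shows "inner X K = G^2 * (G*S - c)"
    and "inner X X = G^2 * (G^2*Q - 2*G*A + c^2)"
    and "inner K K = (real CARD('n) - 1) * G^2"
proof -
  have hgw: "g \<bullet> (H *v w) = A" using sym_swap[OF sym, of g w] by (simp add: A_def w_def)
  have hwg: "w \<bullet> (H *v g) = A" by (simp add: A_def w_def)
  have hgg: "g \<bullet> (H *v g) = c" by (simp add: c_def w_def)
  have wg: "w \<bullet> g = c" by (simp add: c_def inner_commute)
  have gw: "g \<bullet> w = c" by (simp add: c_def)
  have HP: "inner H P = 2*A" "inner P H = 2*A"
    by (simp_all add: P_def inner_add_left inner_add_right inner_H_outer inner_outer_H hgw hwg)
  have HR: "inner H R = c" "inner R H = c"
    by (simp_all add: R_def inner_H_outer inner_outer_H hgg)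
  have PP: "inner P P = 2*G*A + 2*c^2"
    by (simp add: P_def inner_add_left inner_add_right inner_outer_outer gw wg
        G_def[symmetric] A_def[symmetric] power2_eq_square mult.commute)
  have PR: "inner P R = 2*c*G" "inner R P = 2*c*G"
    by (simp_all add: P_def R_def inner_add_left inner_add_right inner_outer_outer gw wg G_def[symmetric])
  have RR: "inner R R = G^2" by (simp add: R_def inner_outer_outer G_def[symmetric] power2_eq_square)
  have HM: "inner H (mat 1) = S" "inner (mat 1) H = S" by (simp_all add: inner_H_mat1 inner_mat1_H S_def)
  have PM: "inner P (mat 1) = 2*c" by (simp add: P_def inner_add_left inner_outer_mat1 gw wg)
  have RM: "inner R (mat 1) = G" "inner (mat 1) R = G" by (simp_all add: R_def inner_outer_mat1 inner_mat1_outer G_def)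
  have MM: "inner (mat 1 :: real^'n^'n) (mat 1) = real CARD('n)" by (rule inner_mat1_mat1)
  have QQ: "inner H H = Q" by (simp add: Q_def)
  show "inner X K = G^2 * (G*S - c)"
    unfolding X_def K_def
    by (simp add: inner_add_left inner_add_right inner_diff_left inner_diff_right
        inner_scaleR_left inner_scaleR_right HP HR PP PR RR HM PM RM MM QQ) (simp add: power2_eq_square algebra_simps)
  show "inner X X = G^2 * (G^2*Q - 2*G*A + c^2)"
    unfolding X_def
    by (simp add: inner_add_left inner_add_right inner_diff_left inner_diff_right
        inner_scaleR_left inner_scaleR_right HP HR PP PR RR QQ) (simp add: power2_eq_square algebra_simps)
  show "inner K K = (real CARD('n) - 1) * G^2"
    unfolding K_def
    by (simp add: inner_add_left inner_add_right inner_diff_left inner_diff_right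
        inner_scaleR_left inner_scaleR_right RR RM MM) (simp add: power2_eq_square algebra_simps)
qed


lemma two_dim_identity:
  fixes H :: "real^'n^'n" and g :: "real^'n"
  assumes sym: "\<And>i j. H$i$j = H$j$i" and n2: "CARD('n) = 2"
  shows "(norm (H *v g))^2 - (\<Sum>i\<in>UNIV. H$i$i) * ((H *v g) \<bullet> g)
      - (1/2) * (frob_norm_sq H - (\<Sum>i\<in>UNIV. H$i$i)^2) * (norm g)^2 = 0"
proof -
  obtain p q :: 'n where pq: "p \<noteq> q" "UNIV = {p, q}"
    using n2 card_2_iff by metis
  have s: "(\<Sum>i\<in>UNIV. f i) = f p + f q" for f :: "'n \<Rightarrow> real"
    by (subst pq(2)) (simp add: pq(1))
  have hqp: "H$q$p = H$p$q" by (rule sym)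
  show ?thesis
    unfolding power2_norm_eq_inner inner_vec_def matrix_vector_mult_def frob_norm_sq_def
    by (simp add: s inner_real_def hqp) (simp add: power2_eq_square algebra_simps)
qed

lemma alg_main:
  fixes H :: "real^'n^'n" and g :: "real^'n"
  assumes sym: "\<And>i j. H$i$j = H$j$i" and n2: "CARD('n) \<ge> 2"
  shows "\<bar>(norm (H *v g))^2 - (\<Sum>i\<in>UNIV. H$i$i) * ((H *v g) \<bullet> g)
      - (1/2) * (frob_norm_sq H - (\<Sum>i\<in>UNIV. H$i$i)^2) * (norm g)^2\<bar>
    \<le> (real CARD('n) - 2) / 2 * (frob_norm_sq H * (norm g)^2 - (norm (H *v g))^2)"
proof -
  define G where "G = g \<bullet> g"
  define w where "w = H *v g"
  define c where "c = g \<bullet> w"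
  define A where "A = w \<bullet> w"
  define S where "S = (\<Sum>i\<in>UNIV. H$i$i)"
  define Q where "Q = inner H H"
  define n where "n = real CARD('n)"
  define M where "M = G^2*Q - 2*G*A + c^2"
  have e1: "(norm (H *v g))^2 = A" by (simp add: A_def w_def power2_norm_eq_inner)
  have e2: "(H *v g) \<bullet> g = c" by (simp add: c_def w_def inner_commute)
  have e3: "frob_norm_sq H = Q" by (simp add: Q_def frob_inner)
  have e4: "(norm g)^2 = G" by (simp add: G_def power2_norm_eq_inner)
  have n2': "n \<ge> 2" using n2 by (simp add: n_def)
  show ?thesis
  proof (cases "G = 0")
    case True
    then have "g = 0" by (simp add: G_def)
    then show ?thesis by simp
  next
    case False
    then have Gp: "G > 0" by (simp add: G_def)
    have F1: "c^2 \<le> G * A" using Cauchy_Schwarz_ineq[of g w] by (simp add: c_def G_def A_def)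
    note kc = key_cs[OF sym, of g, folded G_def w_def, folded c_def A_def S_def Q_def]
    have CS: "(G^2 * (G*S - c))^2 \<le> (G^2 * M) * ((n - 1) * G^2)"
      using Cauchy_Schwarz_ineq[of "G^2 *\<^sub>R H - G *\<^sub>R (outer g w + outer w g) + c *\<^sub>R outer g g"
          "G *\<^sub>R mat 1 - outer g g"] kc by (simp add: M_def n_def)
    have "(G^2 * G^2) * (G*S - c)^2 \<le> (G^2 * G^2) * ((n - 1) * M)"
      using CS by (simp add: power_mult_distrib mult_ac power2_eq_square)
    then have F2: "(G*S - c)^2 \<le> (n - 1) * M"
      using Gp by (simp add: mult_le_cancel_left_pos)
    have Mnn: "M \<ge> 0"
    proof -
      have "0 \<le> (G*S - c)^2" by simp
      also have "\<dots> \<le> (n - 1) * M" by (rule F2)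
      finally have "0 \<le> (n - 1) * M" .
      then show ?thesis using n2' by (simp add: zero_le_mult_iff)
    qed
    define L where "L = A - S * c - (1/2) * (Q - S^2) * G"
    define R where "R = (n - 2) / 2 * (Q * G - A)"
    have id1: "G * (2 * (R - L)) = (n - 2) * (G*A - c^2) + ((n - 1) * M - (G*S - c)^2)"
      by (simp add: L_def R_def M_def power2_eq_square field_simps)
    have "0 \<le> (n - 2) * (G*A - c^2)" using n2' F1 by simp
    then have "0 \<le> G * (2 * (R - L))" using id1 F2 by linarith
    then have up: "L \<le> R" using Gp by (simp add: zero_le_mult_iff)
    have low: "- R \<le> L"
    proof (cases "n = 2")
      case True
      then have "CARD('n) = 2" by (simp add: n_def)
      from two_dim_identity[OF sym this, where g=g] have "L = 0"
        unfolding e1 e2 e3 e4 S_def[symmetric] by (simp add: L_def)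
      then show ?thesis using True by (simp add: R_def)
    next
      case False
      then have "CARD('n) \<noteq> 2" by (simp add: n_def)
      then have "CARD('n) \<ge> 3" using n2 by linarith
      then have n3: "n \<ge> 3" by (simp add: n_def)
      have id2: "G * (2 * (R + L)) = (n - 2) * (G*A - c^2) + ((n - 3) * M + (G*S - c)^2)"
        by (simp add: L_def R_def M_def power2_eq_square field_simps)
      have "0 \<le> (n - 2) * (G*A - c^2)" using n2' F1 by simp
      moreover have "0 \<le> (n - 3) * M" using n3 Mnn by simp
      moreover have "0 \<le> (G*S - c)^2" by simp
      ultimately have "0 \<le> G * (2 * (R + L))" using id2 by linarith
      then show ?thesis using Gp by (simp add: zero_le_mult_iff)
    qed
    have "\<bar>L\<bar> \<le> R" using up low by linarith
    then show ?thesis by (simp add: L_def R_def e1 e2 e3 e4 S_def n_def)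
  qed
qed


theorem lemma2p1:
  fixes U :: "(real^'n) set" and v :: "real^'n \<Rightarrow> real" and x :: "real^'n"
  assumes "CARD('n) \<ge> 2"
    and "open U" and "connected U" and "U \<noteq> {}"
    and "smooth_on U v"
    and "x \<in> U"
  shows "\<bar>(norm (hessian v x *v grad v x))^2 - laplacian v x * inf_laplacian v x
            - (1/2) * (frob_norm_sq (hessian v x) - (laplacian v x)^2) * (norm (grad v x))^2\<bar>
         \<le> (real CARD('n) - 2) / 2 *
            (frob_norm_sq (hessian v x) * (norm (grad v x))^2 - (norm (hessian v x *v grad v x))^2)"
proof -
  have sym: "\<And>i j. hessian v x $ i $ j = hessian v x $ j $ i"
    using mixed_sym[OF assms(2) assms(5) assms(6)] by (simp add: hessian_def)
  have lap: "laplacian v x = (\<Sum>i\<in>UNIV. hessian v x $ i $ i)"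
    by (simp add: laplacian_def grad_def hessian_def)
  have inf: "inf_laplacian v x = (hessian v x *v grad v x) \<bullet> grad v x"
    by (simp add: inf_laplacian_def)
  show ?thesis
    unfolding lap inf using alg_main[OF sym assms(1), of "grad v x"] .
qed

end
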